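(* Let $q$ be a prime power, let $n \le m$ and $1 \le k \le n$ be integers, and let $\mathcal G(n,k)$ be a Gabidulin code of length $n$ and dimension $k$ over $\mathbb F_{q^m}$, with minimum rank distance $d = n-k+1$. Let $\tau$ be an integer with $0 \le \tau < d$. Then there exists a word $\mathbf r \in \mathbb F_{q^m}^n$ such that $$\ell \;\ge\; \left|\mathcal B_{\tau}(\mathbf r) \cap \mathcal G(n,k)\right| \;\ge\; \frac{\left[\begin{smallmatrix} n \\ n-\tau\end{smallmatrix}\right]_q}{(q^m)^{n-\tau-k}} \;\ge\; q^m\, q^{\tau(m+n) - \tau^2 - md},$$ where $\ell = \max_{\mathbf r' \in \mathbb F_{q^m}^n} |\mathcal B_\tau(\mathbf r') \cap \mathcal G(n,k)|$. In particular, for $n = m$: $\ell \ge q^n q^{2n\tau - \tau^2 - nd}$.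
   Context: For $x \in \mathbb F_{q^m}$ write $x^{[i]} = x^{q^i}$. A linearized polynomial over $\mathbb F_{q^m}$ is $f(x) = \sum_{i=0}^{d_f} f_i x^{[i]}$ with $f_i \in \mathbb F_{q^m}$; if $f_{d_f} \ne 0$, $d_f$ is its $q$-degree. A Gabidulin code $\mathcal G(n,k)$ of length $n \le m$ and dimension $k$ over $\mathbb F_{q^m}$ is the set $\{(f(\alpha_0), \dots, f(\alpha_{n-1})) : f \text{ linearized over } \mathbb F_{q^m},\ \deg_q f < k\}$, where $\alpha_0,\dots,\alpha_{n-1} \in \mathbb F_{q^m}$ are fixed and linearly independent over $\mathbb F_q$. Fixing a basis of $\mathbb F_{q^m}$ over $\mathbb F_q$, each vector $\mathbf x \in \mathbb F_{q^m}^n$ corresponds to a matrix $\mathbf X \in \mathbb F_q^{m \times n}$, and $\mathrm{rank}(\mathbf x)$ is the rank of $\mathbf X$ over $\mathbb F_q$; the rank distance between $\mathbf x,\mathbf y$ is $\mathrm{rank}(\mathbf x - \mathbf y)$. The minimum rank distance of the Gabidulin code is $d = n-k+1$. $\mathcal B_\tau(\mathbf a)$ denotes the set of $\mathbf x \in \mathbb F_{q^m}^n$ with $\mathrm{rank}(\mathbf x - \mathbf a) \le \tau$. The Gaussian binomial is $\left[\begin{smallmatrix} n \\ s\end{smallmatrix}\right]_q = \prod_{i=0}^{s-1} \frac{q^n - q^i}{q^s - q^i}$, the number of $s$-dimensional subspaces of an $n$-dimensional $\mathbb F_q$-vector space. *)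

theory Defs
  imports Complex_Main "HOL-Computational_Algebra.Primes"
begin

text \<open>The ambient field F_{q^m} is a finite field type 'a with CARD('a) = q^m.\<close>

definition Fq :: "nat \<Rightarrow> ('a::{finite,field}) set" where
  "Fq q = {x. x ^ q = x}"

definition frob :: "nat \<Rightarrow> nat \<Rightarrow> 'a::{finite,field} \<Rightarrow> 'a" where
  "frob q i x = x ^ (q ^ i)"

definition lin_indep_Fq :: "nat \<Rightarrow> nat set \<Rightarrow> (nat \<Rightarrow> 'a::{finite,field}) \<Rightarrow> bool" where
  "lin_indep_Fq q S v \<longleftrightarrow>
     (\<forall>c. (\<forall>i\<in>S. c i \<in> Fq q) \<longrightarrow> (\<Sum>i\<in>S. c i * v i) = 0 \<longrightarrow> (\<forall>i\<in>S. c i = 0))"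

definition words :: "nat \<Rightarrow> (nat \<Rightarrow> 'a::{finite,field}) set" where
  "words n = {x. \<forall>i\<ge>n. x i = 0}"

text \<open>Rank of a word over F_q: the rank of its m x n matrix over F_q, i.e. the maximal
  number of F_q-linearly independent columns (entries).\<close>
definition rank_q :: "nat \<Rightarrow> nat \<Rightarrow> (nat \<Rightarrow> 'a::{finite,field}) \<Rightarrow> nat" where
  "rank_q q n x = Max {card S | S. S \<subseteq> {..<n} \<and> lin_indep_Fq q S x}"

definition lin_poly_eval :: "nat \<Rightarrow> nat \<Rightarrow> (nat \<Rightarrow> 'a::{finite,field}) \<Rightarrow> 'a \<Rightarrow> 'a" where
  "lin_poly_eval q k f x = (\<Sum>i<k. f i * frob q i x)"

definition gabidulin :: "nat \<Rightarrow> nat \<Rightarrow> nat \<Rightarrow> (nat \<Rightarrow> 'a::{finite,field}) \<Rightarrow> (nat \<Rightarrow> 'a) set" where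
  "gabidulin q n k \<alpha> =
     {(\<lambda>j. if j < n then lin_poly_eval q k f (\<alpha> j) else 0) | f. True}"

definition rank_ball :: "nat \<Rightarrow> nat \<Rightarrow> nat \<Rightarrow> (nat \<Rightarrow> 'a::{finite,field}) \<Rightarrow> (nat \<Rightarrow> 'a) set" where
  "rank_ball q n \<tau> a = {x \<in> words n. rank_q q n (x - a) \<le> \<tau>}"

definition gauss_binom :: "nat \<Rightarrow> nat \<Rightarrow> nat \<Rightarrow> real" where
  "gauss_binom q n s = (\<Prod>i<s. (real q ^ n - real q ^ i) / (real q ^ s - real q ^ i))"

end

theory Submission
  imports Defs "HOL-Number_Theory.Residues" "HOL-Computational_Algebra.Polynomial" "HOL-Library.FuncSet"
begin

definition lp :: "nat \<Rightarrow> (nat \<Rightarrow> 'a) \<Rightarrow> nat \<Rightarrow> 'a \<Rightarrow> 'a::field" where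
  "lp q c d x = (\<Sum>i<d. c i * x ^ (q ^ i))"

definition spanq :: "nat \<Rightarrow> (nat \<Rightarrow> 'a::{finite,field}) \<Rightarrow> nat set \<Rightarrow> 'a set" where
  "spanq q v I = {\<Sum>i\<in>I. c i * v i | c. \<forall>i\<in>I. c i \<in> Fq q}"

definition closedq :: "nat \<Rightarrow> 'a::{finite,field} set \<Rightarrow> bool" where
  "closedq q V \<longleftrightarrow> 0 \<in> V \<and> (\<forall>c x y. c \<in> Fq q \<longrightarrow> x \<in> V \<longrightarrow> y \<in> V \<longrightarrow> c * x + y \<in> V)"

lemma pow_add:
  fixes x y :: "'a::field"
  assumes A: "\<And>x y::'a. (x+y)^q = x^q + y^q"
  shows "(x+y)^(q^i) = x^(q^i) + y^(q^i)"
proof (induction i)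
  case (Suc i)
  have "(x+y)^(q^Suc i) = ((x+y)^(q^i))^q" by (simp only: power_mult power_Suc2)
  also have "\<dots> = (x^(q^i))^q + (y^(q^i))^q" using Suc A by simp
  finally show ?case by (simp only: power_mult power_Suc2)
qed simp

lemma pow_zero: "q \<ge> 1 \<Longrightarrow> (0::'a::field)^(q^i) = 0"
  by simp

lemma pow_neg:
  fixes x :: "'a::field"
  assumes A: "\<And>x y::'a. (x+y)^q = x^q + y^q" and q: "q \<ge> 1"
  shows "(-x)^(q^i) = - (x^(q^i))"
proof -
  have "(x + -x)^(q^i) = x^(q^i) + (-x)^(q^i)" by (rule pow_add[OF A])
  then have "x^(q^i) + (-x)^(q^i) = 0" using q by (simp add: power_0_left)
  then show ?thesis by (simp add: eq_neg_iff_add_eq_0 add.commute)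
qed

lemma pow_sum:
  fixes f :: "'b \<Rightarrow> 'a::field"
  assumes A: "\<And>x y::'a. (x+y)^q = x^q + y^q" and q: "q \<ge> 1"
  shows "(\<Sum>j\<in>J. f j)^(q^i) = (\<Sum>j\<in>J. f j ^ (q^i))"
proof (induction J rule: infinite_finite_induct)
  case (insert x F)
  then show ?case by (simp add: pow_add[OF A])
qed (use q in auto)

lemma Fq_pow: "c \<in> Fq q \<Longrightarrow> c ^ (q^i) = c"
proof (induction i)
  case (Suc i)
  then have "c ^ (q^Suc i) = (c^q)^(q^i)" by (simp add: power_mult mult.commute)
  also have "\<dots> = c" using Suc by (simp add: Fq_def)
  finally show ?case .
qed simp

lemma Fq_0: "q \<ge> 1 \<Longrightarrow> (0::'a::{finite,field}) \<in> Fq q" by (simp add: Fq_def)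
lemma Fq_1: "(1::'a::{finite,field}) \<in> Fq q" by (simp add: Fq_def)
lemma Fq_mult: "c \<in> Fq q \<Longrightarrow> d \<in> Fq q \<Longrightarrow> (c*d::'a::{finite,field}) \<in> Fq q"
  by (simp add: Fq_def power_mult_distrib)
lemma Fq_inv: "c \<in> Fq q \<Longrightarrow> (inverse c::'a::{finite,field}) \<in> Fq q"
  by (simp add: Fq_def power_inverse)
lemma Fq_add:
  assumes A: "\<And>x y::'a. (x+y)^q = x^q + y^q"
  shows "c \<in> Fq q \<Longrightarrow> d \<in> Fq q \<Longrightarrow> (c+d::'a::{finite,field}) \<in> Fq q"
  by (simp add: Fq_def A)
lemma Fq_neg:
  assumes A: "\<And>x y::'a. (x+y)^q = x^q + y^q" and q: "q \<ge> 1"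
  shows "c \<in> Fq q \<Longrightarrow> (-c::'a::{finite,field}) \<in> Fq q"
  using pow_neg[OF A q, of c 1] by (simp add: Fq_def)
lemma Fq_diff:
  assumes A: "\<And>x y::'a. (x+y)^q = x^q + y^q" and q: "q \<ge> 1"
  shows "c \<in> Fq q \<Longrightarrow> d \<in> Fq q \<Longrightarrow> (c-d::'a::{finite,field}) \<in> Fq q"
  using Fq_add[OF A] Fq_neg[OF A q] by (metis diff_conv_add_uminus)
lemma Fq_sum:
  assumes A: "\<And>x y::'a. (x+y)^q = x^q + y^q" and q: "q \<ge> 1"
  shows "(\<And>j. j\<in>J \<Longrightarrow> f j \<in> Fq q) \<Longrightarrow> (\<Sum>j\<in>J. f j::'a::{finite,field}) \<in> Fq q"
proof (induction J rule: infinite_finite_induct)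
  case (insert x F)
  then show ?case using Fq_add[OF A] by simp
qed (use q Fq_0 in auto)

lemma lp_add:
  fixes x y :: "'a::field"
  assumes A: "\<And>x y::'a. (x+y)^q = x^q + y^q"
  shows "lp q c d (x + y) = lp q c d x + lp q c d y"
  by (simp add: lp_def pow_add[OF A] distrib_left sum.distrib)

lemma lp_lin:
  fixes v :: "'b \<Rightarrow> 'a::{finite,field}"
  assumes A: "\<And>x y::'a. (x+y)^q = x^q + y^q" and q: "q \<ge> 1"
    and a: "\<And>j. j \<in> J \<Longrightarrow> a j \<in> Fq q"
  shows "lp q c d (\<Sum>j\<in>J. a j * v j) = (\<Sum>j\<in>J. a j * lp q c d (v j))"
proof -
  have "lp q c d (\<Sum>j\<in>J. a j * v j) = (\<Sum>i<d. c i * (\<Sum>j\<in>J. a j * v j ^ (q^i)))"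
    unfolding lp_def
    by (intro sum.cong refl) (simp add: pow_sum[OF A q] power_mult_distrib Fq_pow a)
  also have "\<dots> = (\<Sum>j\<in>J. a j * lp q c d (v j))"
    unfolding lp_def by (simp add: sum_distrib_left sum_distrib_right mult_ac sum.swap[of _ J])
  finally show ?thesis .
qed

lemma lp_coeff_diff: "lp q (\<lambda>i. c i - c' i) d x = lp q c d x - lp q c' d x"
  by (simp add: lp_def sum_subtractf left_diff_distrib)


lemma lp_roots:
  fixes c :: "nat \<Rightarrow> 'a::{finite,field}"
  assumes q: "q \<ge> 2" and j: "j < d" "c j \<noteq> 0"
  shows "card {x. lp q c d x = 0} \<le> q^(d-1)"
proof -
  define pp where "pp = (\<Sum>i<d. monom (c i) (q^i))"
  have ev: "poly pp x = lp q c d x" for x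
    unfolding pp_def lp_def by (simp add: poly_sum poly_monom)
  have inj: "q^i = q^j \<longleftrightarrow> i = j" for i
    using q by (simp add: power_inject_exp)
  have "coeff pp (q^j) = (\<Sum>i<d. if i = j then c i else 0)"
    unfolding pp_def coeff_sum by (intro sum.cong refl) (simp add: inj)
  also have "\<dots> = c j" using j by simp
  finally have "pp \<noteq> 0" using j by auto
  have "degree pp \<le> q^(d-1)"
    unfolding pp_def
  proof (rule degree_sum_le)
    fix i assume "i \<in> {..<d}"
    then have "q^i \<le> q^(d-1)" using q by (intro power_increasing) auto
    then show "degree (monom (c i) (q^i)) \<le> q^(d-1)"
      using degree_monom_le order_trans by blast
  qed simp
  moreover have "card {x. poly pp x = 0} \<le> degree pp"
    by (rule card_poly_roots_bound) fact
  ultimately show ?thesis by (simp add: ev)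
qed

lemma power_card_same:
  fixes x :: "'a :: {finite,field}"
  shows   "x ^ card (UNIV :: 'a set) = x"
proof (cases "x = 0")
  case False
  have "x * (\<Prod>y\<in>UNIV-{0}. x * y) = x * x ^ (card (UNIV :: 'a set) - 1) * \<Prod>(UNIV-{0})"
    by (simp add: prod.distrib mult_ac)
  also have "x * x ^ (card (UNIV :: 'a set) - 1) = x ^ Suc (card (UNIV :: 'a set) - 1)"
    by (subst power_Suc) auto
  also have "Suc (card (UNIV :: 'a set) - 1) = card (UNIV :: 'a set)"
    using finite_UNIV_card_ge_0[where ?'a = 'a] by simp
  also have "(\<Prod>y\<in>UNIV-{0}. x * y) = (\<Prod>y\<in>UNIV-{0}. y)"
    by (rule prod.reindex_bij_witness[of _ "\<lambda>y. y / x" "\<lambda>y. x * y"]) (use False in auto)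
  finally show ?thesis
    by simp
qed (use finite_UNIV_card_ge_0[where ?'a = 'a] in auto)

lemma card_Fq_le:
  assumes q: "q \<ge> 2"
  shows "card (Fq q :: 'a::{finite,field} set) \<le> q"
proof -
  define c :: "nat \<Rightarrow> 'a" where "c = (\<lambda>i. if i = 0 then -1 else 1)"
  have "Fq q = {x::'a. lp q c 2 x = 0}"
    by (auto simp: Fq_def lp_def c_def numeral_2_eq_2 lessThan_Suc)
  moreover have "card {x::'a. lp q c 2 x = 0} \<le> q^(2-1)"
    by (rule lp_roots[OF q, of 1]) (auto simp: c_def)
  ultimately show ?thesis by simp
qed

lemma card_Fq_ge:
  assumes A: "\<And>x y::'a. (x+y)^q = x^q + y^q" and q: "q \<ge> 2"
    and card: "card (UNIV :: 'a::{finite,field} set) = q ^ m"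
  shows "card (Fq q :: 'a set) \<ge> q"
proof -
  have q1: "q \<ge> 1" using q by simp
  have "m \<noteq> 0"
  proof
    assume "m = 0"
    then have "card (UNIV :: 'a set) = 1" using card by simp
    then obtain z :: 'a where "UNIV = {z}" using card_1_singletonE by blast
    then show False by (metis UNIV_I singletonD zero_neq_one)
  qed
  define T where "T = (\<lambda>x::'a. x^q - x)"
  have diffq: "(x - y)^(q^i) = x^(q^i) - y^(q^i)" for x y :: 'a and i
    using pow_add[OF A, of x "-y" i] pow_neg[OF A q1, of y i] by simp
  have tel: "lp q (\<lambda>_. 1) m (T x) = 0" for x
  proof -
    have "lp q (\<lambda>_. 1) m (T x) = (\<Sum>i<m. x^(q^Suc i) - x^(q^i))"
      unfolding lp_def T_def
      by (intro sum.cong refl) (simp add: diffq power_mult[symmetric] mult.commute)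
    also have "\<dots> = x^(q^m) - x"
      using sum_lessThan_telescope[of "\<lambda>i. x^(q^i)" m] by simp
    also have "x^(q^m) = x" using power_card_same[of x] card by simp
    finally show ?thesis by simp
  qed
  have "card (range T) \<le> card {y::'a. lp q (\<lambda>_. 1) m y = 0}"
    using tel by (intro card_mono) auto
  also have "\<dots> \<le> q^(m-1)"
    by (rule lp_roots[OF q, of 0]) (use \<open>m \<noteq> 0\<close> in auto)
  finally have r: "card (range T) \<le> q^(m-1)" .
  have fib: "card {x. T x = y} \<le> card (Fq q :: 'a set)" if "y \<in> range T" for y
  proof -
    obtain x0 where x0: "y = T x0" using \<open>y \<in> range T\<close> by auto
    have "(\<lambda>x. x - x0) ` {x. T x = y} \<subseteq> Fq q"
    proof
      fix z assume "z \<in> (\<lambda>x. x - x0) ` {x. T x = y}"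
      then obtain x where "T x = T x0" "z = x - x0" using x0 by auto
      have "(x - x0)^q = x^q - x0^q" using diffq[of x x0 1] by simp
      also have "\<dots> = x - x0" using \<open>T x = T x0\<close> unfolding T_def by (simp add: algebra_simps)
      finally show "z \<in> Fq q" using \<open>z = x - x0\<close> by (simp add: Fq_def)
    qed
    moreover have "inj_on (\<lambda>x. x - x0) {x. T x = y}" by (auto intro: inj_onI)
    ultimately show ?thesis by (metis card_image card_mono finite)
  qed
  have U: "(\<Union>y\<in>range T. {x. T x = y}) = UNIV" by auto
  have "q^m = card (\<Union>y\<in>range T. {x. T x = y})" using card by (simp only: U)
  also have "\<dots> \<le> (\<Sum>y\<in>range T. card {x. T x = y})" by (rule card_UN_le) simp
  also have "\<dots> \<le> (\<Sum>y\<in>range T. card (Fq q :: 'a set))" by (rule sum_mono) (rule fib)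
  also have "\<dots> = card (range T) * card (Fq q :: 'a set)" by simp
  also have "\<dots> \<le> q^(m-1) * card (Fq q :: 'a set)" using r by simp
  finally have le: "q^m \<le> q^(m-1) * card (Fq q :: 'a set)" .
  have "q^m = q * q^(m-1)" using \<open>m \<noteq> 0\<close> by (cases m) auto
  with le have "q^(m-1) * q \<le> q^(m-1) * card (Fq q :: 'a set)" by (simp add: mult.commute)
  then show ?thesis using q by simp
qed


lemma words_image:
  "words t = (\<lambda>f i. if i < t then f i else 0) ` (PiE {..<t} (\<lambda>_. UNIV :: 'a::{finite,field} set))"
proof
  show "words t \<subseteq> (\<lambda>f i. if i < t then f i else 0) ` (PiE {..<t} (\<lambda>_. UNIV :: 'a set))"
  proof
    fix u :: "nat \<Rightarrow> 'a" assume u: "u \<in> words t"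
    have e: "u = (\<lambda>i. if i < t then restrict u {..<t} i else 0)"
      using u by (auto simp: words_def fun_eq_iff)
    have r: "restrict u {..<t} \<in> PiE {..<t} (\<lambda>_. UNIV :: 'a set)" by (simp add: restrict_PiE_iff)
    show "u \<in> (\<lambda>f i. if i < t then f i else 0) ` (PiE {..<t} (\<lambda>_. UNIV :: 'a set))"
      by (rule image_eqI[where x="restrict u {..<t}", OF _ r]) (rule e)
  qed
  show "(\<lambda>f i. if i < t then f i else 0) ` (PiE {..<t} (\<lambda>_. UNIV :: 'a set)) \<subseteq> words t"
    unfolding words_def by (rule image_subsetI) simp
qed

lemma finite_words: "finite (words t :: (nat \<Rightarrow> 'a::{finite,field}) set)"
  unfolding words_image by (intro finite_imageI finite_PiE) auto

lemma card_words: "card (words t :: (nat \<Rightarrow> 'a::{finite,field}) set) = card (UNIV :: 'a set) ^ t"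
proof -
  have "inj_on (\<lambda>f i. if i < t then f i else (0::'a)) (PiE {..<t} (\<lambda>_. UNIV :: 'a set))"
  proof (rule inj_onI)
    fix f g :: "nat \<Rightarrow> 'a"
    assume f: "f \<in> PiE {..<t} (\<lambda>_. UNIV)" and g: "g \<in> PiE {..<t} (\<lambda>_. UNIV)"
      and e: "(\<lambda>i. if i < t then f i else 0) = (\<lambda>i. if i < t then g i else 0)"
    show "f = g"
    proof (rule PiE_ext[OF f g])
      fix i assume "i \<in> {..<t}" then show "f i = g i" using fun_cong[OF e, of i] by simp
    qed
  qed
  then show ?thesis unfolding words_image by (simp add: card_image card_PiE)
qed

lemma in_words_iff: "u \<in> words t \<longleftrightarrow> (\<forall>i\<ge>t. u i = 0)" by (simp add: words_def)

lemma card_span: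
  fixes v :: "nat \<Rightarrow> 'a::{finite,field}"
  assumes A: "\<And>x y::'a. (x+y)^q = x^q + y^q" and q: "q \<ge> 1"
    and I: "finite I" and ind: "lin_indep_Fq q I v"
  shows "card (spanq q v I) = card (Fq q :: 'a set) ^ card I"
proof -
  have S: "spanq q v I = (\<lambda>c. \<Sum>i\<in>I. c i * v i) ` (PiE I (\<lambda>_. Fq q))"
  proof
    show "spanq q v I \<subseteq> (\<lambda>c. \<Sum>i\<in>I. c i * v i) ` (PiE I (\<lambda>_. Fq q))"
    proof
      fix x assume "x \<in> spanq q v I"
      then obtain c where c: "\<forall>i\<in>I. c i \<in> Fq q" "x = (\<Sum>i\<in>I. c i * v i)"
        by (auto simp: spanq_def)
      show "x \<in> (\<lambda>c. \<Sum>i\<in>I. c i * v i) ` (PiE I (\<lambda>_. Fq q))"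
        using c by (intro image_eqI[where x="restrict c I"]) auto
    qed
  qed (auto simp: spanq_def)
  have "inj_on (\<lambda>c. \<Sum>i\<in>I. c i * v i) (PiE I (\<lambda>_. Fq q))"
  proof (rule inj_onI)
    fix c d assume c: "c \<in> PiE I (\<lambda>_. Fq q)" and d: "d \<in> PiE I (\<lambda>_. Fq q)"
      and e: "(\<Sum>i\<in>I. c i * v i) = (\<Sum>i\<in>I. d i * v i)"
    have "(\<Sum>i\<in>I. (c i - d i) * v i) = 0"
      using e by (simp add: left_diff_distrib sum_subtractf)
    moreover have "\<forall>i\<in>I. c i - d i \<in> Fq q" using c d Fq_diff[OF A q] by auto
    ultimately have "\<forall>i\<in>I. c i - d i = 0"
      using ind[unfolded lin_indep_Fq_def, rule_format, of "\<lambda>i. c i - d i"] by blast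
    then show "c = d" using c d by (intro PiE_ext) auto
  qed
  then show ?thesis unfolding S using I by (simp add: card_image card_PiE)
qed

lemma sum_in_closed:
  fixes v :: "nat \<Rightarrow> 'a::{finite,field}"
  assumes V: "closedq q V" and c: "\<And>i. i \<in> I \<Longrightarrow> c i \<in> Fq q" and vV: "\<And>i. i \<in> I \<Longrightarrow> v i \<in> V"
  shows "(\<Sum>i\<in>I. c i * v i) \<in> V"
  using c vV
proof (induction I rule: infinite_finite_induct)
  case (insert x F)
  then show ?case using V unfolding closedq_def by simp
qed (use V in \<open>auto simp: closedq_def\<close>)

lemma span_sub:
  assumes V: "closedq q V" and vV: "\<And>i. i \<in> I \<Longrightarrow> v i \<in> V"
  shows "spanq q v I \<subseteq> V"
  using sum_in_closed[OF V _ vV] by (auto simp: spanq_def)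

lemma closed_span:
  fixes v :: "nat \<Rightarrow> 'a::{finite,field}"
  assumes A: "\<And>x y::'a. (x+y)^q = x^q + y^q" and q: "q \<ge> 1"
  shows "closedq q (spanq q v I)"
  unfolding closedq_def
proof (intro conjI allI impI)
  show "0 \<in> spanq q v I"
    unfolding spanq_def using Fq_0[OF q] by (intro CollectI exI[of _ "\<lambda>_. 0"]) auto
  fix c x y :: 'a assume c: "c \<in> Fq q" and x: "x \<in> spanq q v I" and y: "y \<in> spanq q v I"
  obtain a where a: "\<forall>i\<in>I. a i \<in> Fq q" "x = (\<Sum>i\<in>I. a i * v i)" using x by (auto simp: spanq_def)
  obtain b where b: "\<forall>i\<in>I. b i \<in> Fq q" "y = (\<Sum>i\<in>I. b i * v i)" using y by (auto simp: spanq_def)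
  have "c * x + y = (\<Sum>i\<in>I. (c * a i + b i) * v i)"
    using a b by (simp add: sum_distrib_left sum.distrib distrib_right mult.assoc)
  moreover have "\<forall>i\<in>I. c * a i + b i \<in> Fq q" using a b c Fq_add[OF A] Fq_mult by blast
  ultimately show "c * x + y \<in> spanq q v I" unfolding spanq_def mem_Collect_eq
    by (intro exI[where x="\<lambda>i. c * a i + b i"] conjI)
qed

lemma in_span:
  fixes v :: "nat \<Rightarrow> 'a::{finite,field}"
  assumes q: "q \<ge> 1" and I: "finite I" and j: "j \<in> I"
  shows "v j \<in> spanq q v I"
proof -
  have "(\<Sum>i\<in>I. (if i = j then 1 else 0) * v i) = (\<Sum>i\<in>I. if i = j then v j else 0)"
    by (intro sum.cong) auto
  also have "\<dots> = v j" using I j by simp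
  finally have "(\<Sum>i\<in>I. (if i = j then 1 else 0) * v i) = v j" .
  moreover have "\<forall>i\<in>I. (if i = j then 1 else 0) \<in> (Fq q :: 'a set)" using Fq_0[OF q] Fq_1 by auto
  ultimately show ?thesis unfolding spanq_def mem_Collect_eq
    by (intro exI[where x="\<lambda>i. if i = j then 1 else 0"] conjI) simp_all
qed

lemma lp_smult:
  fixes x :: "'a::{finite,field}"
  assumes "a \<in> Fq q"
  shows "lp q c d (a * x) = a * lp q c d x"
  unfolding lp_def using assms by (simp add: power_mult_distrib Fq_pow sum_distrib_left mult_ac)

lemma closed_roots:
  fixes c :: "nat \<Rightarrow> 'a::{finite,field}"
  assumes A: "\<And>x y::'a. (x+y)^q = x^q + y^q" and q: "q \<ge> 1"
  shows "closedq q {x. lp q c d x = 0}"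
  unfolding closedq_def
proof (intro conjI allI impI)
  show "0 \<in> {x. lp q c d x = 0}" using q by (simp add: lp_def power_0_left)
  fix a x y :: 'a assume "a \<in> Fq q" "x \<in> {x. lp q c d x = 0}" "y \<in> {x. lp q c d x = 0}"
  then show "a * x + y \<in> {x. lp q c d x = 0}" by (simp add: lp_add[OF A] lp_smult)
qed

lemma span_cong: "(\<And>i. i \<in> I \<Longrightarrow> v i = w i) \<Longrightarrow> spanq q v I = spanq q w I"
proof -
  assume "\<And>i. i \<in> I \<Longrightarrow> v i = w i"
  then have "\<And>c. (\<Sum>i\<in>I. c i * v i) = (\<Sum>i\<in>I. c i * w i)" by (intro sum.cong) auto
  then show ?thesis unfolding spanq_def by simp
qed

lemma indep_cong: "(\<And>i. i \<in> I \<Longrightarrow> v i = w i) \<Longrightarrow> lin_indep_Fq q I v = lin_indep_Fq q I w"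
proof -
  assume "\<And>i. i \<in> I \<Longrightarrow> v i = w i"
  then have "\<And>c. (\<Sum>i\<in>I. c i * v i) = (\<Sum>i\<in>I. c i * w i)" by (intro sum.cong) auto
  then show ?thesis unfolding lin_indep_Fq_def by simp
qed


definition tup :: "nat \<Rightarrow> nat \<Rightarrow> 'a::{finite,field} set \<Rightarrow> (nat \<Rightarrow> 'a) set" where
  "tup q t V = {u \<in> words t. (\<forall>i<t. u i \<in> V) \<and> lin_indep_Fq q {..<t} u}"

lemma indep_Suc:
  fixes w :: "nat \<Rightarrow> 'a::{finite,field}"
  assumes A: "\<And>x y::'a. (x+y)^q = x^q + y^q" and q: "q \<ge> 1"
  shows "lin_indep_Fq q {..<Suc t} w \<longleftrightarrow> lin_indep_Fq q {..<t} w \<and> w t \<notin> spanq q w {..<t}"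
proof
  assume L: "lin_indep_Fq q {..<Suc t} w"
  have "lin_indep_Fq q {..<t} w"
    unfolding lin_indep_Fq_def
  proof (intro allI impI)
    fix c assume c: "\<forall>i\<in>{..<t}. c i \<in> Fq q" and s: "(\<Sum>i\<in>{..<t}. c i * w i) = 0"
    have c': "\<forall>i\<in>{..<Suc t}. (c(t:=0)) i \<in> Fq q" using c Fq_0[OF q] by auto
    have "(\<Sum>i\<in>{..<t}. (c(t:=0)) i * w i) = (\<Sum>i\<in>{..<t}. c i * w i)" by (intro sum.cong) auto
    then have "(\<Sum>i\<in>{..<Suc t}. (c(t:=0)) i * w i) = 0" using s by simp
    then have "\<forall>i\<in>{..<Suc t}. (c(t:=0)) i = 0" using L c' unfolding lin_indep_Fq_def by blast
    then show "\<forall>i\<in>{..<t}. c i = 0"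
      by (metis fun_upd_other lessThan_iff less_Suc_eq less_irrefl)
  qed
  moreover have "w t \<notin> spanq q w {..<t}"
  proof
    assume "w t \<in> spanq q w {..<t}"
    then obtain c where c: "\<forall>i\<in>{..<t}. c i \<in> Fq q" and e: "w t = (\<Sum>i\<in>{..<t}. c i * w i)"
      by (auto simp: spanq_def)
    have c': "\<forall>i\<in>{..<Suc t}. (c(t:=-1)) i \<in> Fq q" using c Fq_neg[OF A q] Fq_1 by auto
    have "(\<Sum>i\<in>{..<t}. (c(t:=-1)) i * w i) = (\<Sum>i\<in>{..<t}. c i * w i)" by (intro sum.cong) auto
    then have "(\<Sum>i\<in>{..<Suc t}. (c(t:=-1)) i * w i) = 0" using e by simp
    then have "\<forall>i\<in>{..<Suc t}. (c(t:=-1)) i = 0" using L c' unfolding lin_indep_Fq_def by blast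
    moreover have "t \<in> {..<Suc t}" by simp
    ultimately have "(c(t:=-1)) t = 0" by blast
    then show False by simp
  qed
  ultimately show "lin_indep_Fq q {..<t} w \<and> w t \<notin> spanq q w {..<t}" ..
next
  assume R: "lin_indep_Fq q {..<t} w \<and> w t \<notin> spanq q w {..<t}"
  show "lin_indep_Fq q {..<Suc t} w"
    unfolding lin_indep_Fq_def
  proof (intro allI impI)
    fix c assume c: "\<forall>i\<in>{..<Suc t}. c i \<in> Fq q" and s: "(\<Sum>i\<in>{..<Suc t}. c i * w i) = 0"
    have ct: "c t = 0"
    proof (rule ccontr)
      assume nz: "c t \<noteq> 0"
      have "w t = (\<Sum>i\<in>{..<t}. (- c i / c t) * w i)"
      proof -
        have "c t * w t = - (\<Sum>i\<in>{..<t}. c i * w i)" using s by (simp add: eq_neg_iff_add_eq_0 add.commute)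
        then have "w t = - (\<Sum>i\<in>{..<t}. c i * w i) / c t" using nz by (simp add: field_simps)
        also have "\<dots> = (\<Sum>i\<in>{..<t}. (- c i / c t) * w i)"
          by (simp add: sum_divide_distrib sum_negf[symmetric])
        finally show ?thesis .
      qed
      moreover have "\<forall>i\<in>{..<t}. - c i / c t \<in> Fq q"
      proof
        fix i assume "i \<in> {..<t}"
        then have "c i \<in> Fq q" "c t \<in> Fq q" using c by auto
        then have "c i * inverse (c t) \<in> Fq q" using Fq_mult Fq_inv by blast
        then show "- c i / c t \<in> Fq q" using Fq_neg[OF A q] by (simp add: divide_inverse)
      qed
      ultimately have "w t \<in> spanq q w {..<t}" unfolding spanq_def mem_Collect_eq
        by (intro exI[where x="\<lambda>i. - c i / c t"] conjI)
      then show False using R by blast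
    qed
    have "(\<Sum>i\<in>{..<t}. c i * w i) = 0" using s ct by simp
    then have "\<forall>i\<in>{..<t}. c i = 0" using R c unfolding lin_indep_Fq_def by auto
    then show "\<forall>i\<in>{..<Suc t}. c i = 0" using ct by (auto simp: less_Suc_eq)
  qed
qed

lemma card_tup:
  fixes V :: "'a::{finite,field} set"
  assumes A: "\<And>x y::'a. (x+y)^q = x^q + y^q" and q: "q \<ge> 1" and V: "closedq q V"
  shows "card (tup q t V) = (\<Prod>i<t. card V - card (Fq q :: 'a set)^i)"
proof (induction t)
  case 0
  have "tup q 0 V = {\<lambda>_. 0}" by (auto simp: tup_def words_def lin_indep_Fq_def)
  then show ?case by simp
next
  case (Suc t)
  define S where "S = (SIGMA u:tup q t V. V - spanq q u {..<t})"
  have eq: "tup q (Suc t) V = (\<lambda>(u,x). u(t:=x)) ` S"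
  proof
    show "tup q (Suc t) V \<subseteq> (\<lambda>(u,x). u(t:=x)) ` S"
    proof
      fix w assume w: "w \<in> tup q (Suc t) V"
      define u where "u = w(t:=0)"
      have agree: "\<And>i. i \<in> {..<t} \<Longrightarrow> u i = w i" by (auto simp: u_def)
      have wi: "lin_indep_Fq q {..<Suc t} w" "\<forall>i<Suc t. w i \<in> V" "w \<in> words (Suc t)"
        using w by (auto simp: tup_def)
      then have "lin_indep_Fq q {..<t} w \<and> w t \<notin> spanq q w {..<t}" using indep_Suc[OF A q] by blast
      moreover have "lin_indep_Fq q {..<t} u = lin_indep_Fq q {..<t} w" by (rule indep_cong) (rule agree)
      moreover have "spanq q u {..<t} = spanq q w {..<t}" by (rule span_cong) (rule agree)
      ultimately have "lin_indep_Fq q {..<t} u \<and> w t \<notin> spanq q u {..<t}" by simp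
      moreover have "u \<in> words t" using wi(3) by (auto simp: words_def u_def)
      moreover have "\<forall>i<t. u i \<in> V" using wi(2) by (auto simp: u_def)
      moreover have "w t \<in> V" using wi(2) by auto
      ultimately have "(u, w t) \<in> S" by (auto simp: S_def tup_def)
      moreover have "w = (\<lambda>(u,x). u(t:=x)) (u, w t)" by (auto simp: u_def)
      ultimately show "w \<in> (\<lambda>(u,x). u(t:=x)) ` S" by blast
    qed
  next
    show "(\<lambda>(u,x). u(t:=x)) ` S \<subseteq> tup q (Suc t) V"
    proof
      fix w assume "w \<in> (\<lambda>(u,x). u(t:=x)) ` S"
      then obtain u x where ux: "(u,x) \<in> S" and w: "w = u(t:=x)" by auto
      have agree: "\<And>i. i \<in> {..<t} \<Longrightarrow> w i = u i" by (auto simp: w)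
      have ui: "u \<in> words t" "\<forall>i<t. u i \<in> V" "lin_indep_Fq q {..<t} u" "x \<in> V" "x \<notin> spanq q u {..<t}"
        using ux by (auto simp: S_def tup_def)
      have "lin_indep_Fq q {..<t} w = lin_indep_Fq q {..<t} u" by (rule indep_cong) (rule agree)
      moreover have "spanq q w {..<t} = spanq q u {..<t}" by (rule span_cong) (rule agree)
      ultimately have "lin_indep_Fq q {..<t} w \<and> w t \<notin> spanq q w {..<t}"
        using ui by (simp add: w)
      then have "lin_indep_Fq q {..<Suc t} w" using indep_Suc[OF A q] by blast
      moreover have "w \<in> words (Suc t)" using ui(1) by (auto simp: words_def w)
      moreover have "\<forall>i<Suc t. w i \<in> V" using ui by (auto simp: w less_Suc_eq)
      ultimately show "w \<in> tup q (Suc t) V" by (auto simp: tup_def)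
    qed
  qed
  have inj: "inj_on (\<lambda>(u,x). u(t:=x)) S"
  proof (rule inj_onI)
    fix a b assume a: "a \<in> S" and b: "b \<in> S" and e: "(\<lambda>(u,x). u(t:=x)) a = (\<lambda>(u,x). u(t:=x)) b"
    obtain u x where [simp]: "a = (u,x)" by (cases a)
    obtain u' x' where [simp]: "b = (u',x')" by (cases b)
    have "u t = 0" "u' t = 0" using a b by (auto simp: S_def tup_def words_def)
    moreover have "u(t:=x) = u'(t:=x')" using e by simp
    ultimately have "x = x'" "u = u'"
      by (metis fun_upd_same, metis fun_upd_idem fun_upd_upd)
    then show "a = b" by simp
  qed
  have fin: "finite (tup q t V)"
    by (rule finite_subset[OF _ finite_words[of t]]) (auto simp: tup_def)
  have "card (tup q (Suc t) V) = card S" unfolding eq using inj by (rule card_image)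
  also have "\<dots> = (\<Sum>u\<in>tup q t V. card (V - spanq q u {..<t}))"
    unfolding S_def using fin by (intro card_SigmaI) auto
  also have "\<dots> = (\<Sum>u\<in>tup q t V. card V - card (Fq q :: 'a set)^t)"
  proof (intro sum.cong refl)
    fix u assume u: "u \<in> tup q t V"
    have "spanq q u {..<t} \<subseteq> V" using u by (intro span_sub[OF V]) (auto simp: tup_def)
    moreover have "card (spanq q u {..<t}) = card (Fq q :: 'a set)^t"
      using card_span[OF A q, of "{..<t}" u] u by (simp add: tup_def)
    ultimately show "card (V - spanq q u {..<t}) = card V - card (Fq q :: 'a set)^t"
      by (simp add: card_Diff_subset finite_subset)
  qed
  also have "\<dots> = card (tup q t V) * (card V - card (Fq q :: 'a set)^t)" by simp
  finally show ?case using Suc by simp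
qed


definition mon :: "nat \<Rightarrow> (nat \<Rightarrow> 'a) \<Rightarrow> nat \<Rightarrow> 'a \<Rightarrow> 'a::field" where
  "mon q p s = lp q (p(s:=1)) (Suc s)"

lemma mon_eq: "mon q p s x = lp q p s x + x^(q^s)"
proof -
  have "(\<Sum>i<s. (p(s:=1)) i * x^(q^i)) = (\<Sum>i<s. p i * x^(q^i))" by (intro sum.cong) auto
  then show ?thesis by (simp add: mon_def lp_def)
qed

lemma card_roots_mon:
  assumes q: "q \<ge> 2"
  shows "card {x::'a::{finite,field}. mon q p s x = 0} \<le> q^s"
  using lp_roots[OF q, of s "Suc s" "p(s:=1)"] unfolding mon_def by simp

lemma dim_bound:
  fixes \<alpha> w :: "nat \<Rightarrow> 'a::{finite,field}"
  assumes A: "\<And>x y::'a. (x+y)^q = x^q + y^q" and q: "q \<ge> 2"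
    and cq: "card (Fq q :: 'a set) = q"
    and J: "finite J" and wi: "lin_indep_Fq q J w" and ws: "\<And>j. j \<in> J \<Longrightarrow> w j \<in> spanq q \<alpha> I"
    and I: "finite I" and ai: "lin_indep_Fq q I \<alpha>"
  shows "card J \<le> card I"
proof -
  have q1: "q \<ge> 1" using q by simp
  have "spanq q w J \<subseteq> spanq q \<alpha> I"
    by (rule span_sub[OF closed_span[OF A q1]]) (rule ws)
  then have "card (spanq q w J) \<le> card (spanq q \<alpha> I)" by (intro card_mono) auto
  then have "q ^ card J \<le> q ^ card I" using card_span[OF A q1 J wi] card_span[OF A q1 I ai] cq by simp
  then show ?thesis using q by (simp add: power_le_imp_le_exp)
qed

lemma vanish_zero:
  fixes u c :: "nat \<Rightarrow> 'a::{finite,field}"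
  assumes A: "\<And>x y::'a. (x+y)^q = x^q + y^q" and q: "q \<ge> 2"
    and cq: "card (Fq q :: 'a set) = q"
    and ui: "lin_indep_Fq q {..<t} u" and z: "\<And>j. j < t \<Longrightarrow> lp q c d (u j) = 0"
    and dt: "d \<le> t"
  shows "\<forall>i<d. c i = 0"
proof (rule ccontr)
  have q1: "q \<ge> 1" using q by simp
  assume "\<not> (\<forall>i<d. c i = 0)"
  then obtain i where i: "i < d" "c i \<noteq> 0" by auto
  have "spanq q u {..<t} \<subseteq> {x. lp q c d x = 0}"
    by (rule span_sub[OF closed_roots[OF A q1]]) (use z in auto)
  then have "card (spanq q u {..<t}) \<le> card {x. lp q c d x = 0}" by (intro card_mono) auto
  also have "\<dots> \<le> q^(d-1)" by (rule lp_roots[where j=i and d=d and c=c, OF q i])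
  finally have "q^t \<le> q^(d-1)" using card_span[OF A q1 _ ui] cq by simp
  then have "t \<le> d - 1" using q by (simp add: power_le_imp_le_exp)
  then show False using i dt by simp
qed

lemma exists_mon:
  fixes u :: "nat \<Rightarrow> 'a::{finite,field}"
  assumes A: "\<And>x y::'a. (x+y)^q = x^q + y^q" and q: "q \<ge> 2"
    and cq: "card (Fq q :: 'a set) = q"
    and ui: "lin_indep_Fq q {..<s} u"
  shows "\<exists>p \<in> words s. \<forall>j<s. mon q p s (u j) = 0"
proof -
  define M where "M = (\<lambda>c::nat \<Rightarrow> 'a. \<lambda>j. if j < s then lp q c s (u j) else 0)"
  have sub: "M ` words s \<subseteq> words s" by (auto simp: M_def words_def)
  have inj: "inj_on M (words s)"
  proof (rule inj_onI)
    fix c c' assume c: "c \<in> words s" and c': "c' \<in> words s" and e: "M c = M c'"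
    have "\<And>j. j < s \<Longrightarrow> lp q (\<lambda>i. c i - c' i) s (u j) = 0"
    proof -
      fix j assume j: "j < s"
      have "M c j = M c' j" using e by simp
      then show "lp q (\<lambda>i. c i - c' i) s (u j) = 0" using j by (simp add: M_def lp_coeff_diff)
    qed
    then have "\<forall>i<s. c i - c' i = 0" by (intro vanish_zero[OF A q cq ui]) auto
    show "c = c'"
    proof
      fix i show "c i = c' i"
      proof (cases "i < s")
        case True then show ?thesis using \<open>\<forall>i<s. c i - c' i = 0\<close> by simp
      next
        case False then show ?thesis using c c' by (simp add: words_def)
      qed
    qed
  qed
  have "M ` words s = words s" by (rule endo_inj_surj[OF finite_words sub inj])
  moreover have "(\<lambda>j. if j < s then - (u j ^ (q^s)) else 0) \<in> words s" by (auto simp: words_def)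
  ultimately have "(\<lambda>j. if j < s then - (u j ^ (q^s)) else 0) \<in> M ` words s" by simp
  then obtain p where p: "p \<in> words s" "M p = (\<lambda>j. if j < s then - (u j ^ (q^s)) else 0)"
    by (auto simp del: words_def)
  have "\<forall>j<s. mon q p s (u j) = 0"
  proof (intro allI impI)
    fix j assume "j < s"
    then have "lp q p s (u j) = - (u j ^ (q^s))" using fun_cong[OF p(2), of j] by (simp add: M_def)
    then show "mon q p s (u j) = 0" by (simp add: mon_eq)
  qed
  then show ?thesis using p(1) by blast
qed


lemma rank_le:
  fixes \<alpha> u w p :: "nat \<Rightarrow> 'a::{finite,field}"
  assumes A: "\<And>x y::'a. (x+y)^q = x^q + y^q" and q: "q \<ge> 2"
    and cq: "card (Fq q :: 'a set) = q"
    and ai: "lin_indep_Fq q {..<n} \<alpha>"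
    and u: "u \<in> tup q s (spanq q \<alpha> {..<n})" and uz: "\<And>j. j < s \<Longrightarrow> mon q p s (u j) = 0"
    and w: "\<And>j. j < n \<Longrightarrow> w j = mon q p s (\<alpha> j)"
  shows "rank_q q n w \<le> n - s"
proof -
  have q1: "q \<ge> 1" using q by simp
  have ui: "lin_indep_Fq q {..<s} u" "\<And>i. i < s \<Longrightarrow> u i \<in> spanq q \<alpha> {..<n}"
    using u by (auto simp: tup_def)
  define P where "P = mon q p s"
  have P0: "P 0 = 0" using q1 by (simp add: P_def mon_def lp_def power_0_left)
  have bound: "card S \<le> n - s" if S: "S \<subseteq> {..<n}" and Si: "lin_indep_Fq q S w" for S
  proof -
    have finS: "finite S" using S finite_subset by blast
    define z where "z = (\<lambda>i. if i < s then u i else \<alpha> (i - s))"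
    define J where "J = {..<s} \<union> (\<lambda>j. j + s) ` S"
    have disj: "{..<s} \<inter> (\<lambda>j. j + s) ` S = {}" by auto
    have injS: "inj_on (\<lambda>j. j + s) S" by (auto intro: inj_onI)
    have finJ: "finite J" using finS by (simp add: J_def)
    have zind: "lin_indep_Fq q J z"
      unfolding lin_indep_Fq_def
    proof (intro allI impI)
      fix c assume c: "\<forall>i\<in>J. c i \<in> Fq q" and sum0: "(\<Sum>i\<in>J. c i * z i) = 0"
      have split: "(\<Sum>i\<in>J. f i) = (\<Sum>i<s. f i) + (\<Sum>j\<in>S. f (j + s))" for f :: "nat \<Rightarrow> 'a"
        unfolding J_def using finS disj injS by (simp add: sum.union_disjoint sum.reindex)
      have "P (\<Sum>i\<in>J. c i * z i) = (\<Sum>i\<in>J. c i * P (z i))"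
        unfolding P_def mon_def by (rule lp_lin[OF A q1]) (use c in auto)
      also have "\<dots> = (\<Sum>i<s. c i * P (u i)) + (\<Sum>j\<in>S. c (j + s) * P (\<alpha> j))"
        by (simp add: split z_def)
      also have "(\<Sum>i<s. c i * P (u i)) = 0" using uz by (simp add: P_def)
      also have "(\<Sum>j\<in>S. c (j + s) * P (\<alpha> j)) = (\<Sum>j\<in>S. c (j + s) * w j)"
        using S w by (intro sum.cong) (auto simp: P_def)
      finally have "(\<Sum>j\<in>S. c (j + s) * w j) = 0" using sum0 P0 by simp
      moreover have "\<forall>j\<in>S. c (j + s) \<in> Fq q" using c by (auto simp: J_def)
      ultimately have cS: "\<forall>j\<in>S. c (j + s) = 0"
        using Si[unfolded lin_indep_Fq_def, rule_format, of "\<lambda>j. c (j + s)"] by blast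
      have "(\<Sum>i\<in>J. c i * z i) = (\<Sum>i<s. c i * u i) + (\<Sum>j\<in>S. c (j + s) * \<alpha> j)"
        by (simp add: split z_def)
      also have "(\<Sum>j\<in>S. c (j + s) * \<alpha> j) = 0" using cS by simp
      finally have "(\<Sum>i<s. c i * u i) = 0" using sum0 by simp
      moreover have "\<forall>i\<in>{..<s}. c i \<in> Fq q" using c by (auto simp: J_def)
      ultimately have "\<forall>i\<in>{..<s}. c i = 0"
        using ui(1)[unfolded lin_indep_Fq_def, rule_format, of c] by blast
      then show "\<forall>i\<in>J. c i = 0" using cS by (auto simp: J_def)
    qed
    have zs: "z i \<in> spanq q \<alpha> {..<n}" if "i \<in> J" for i
    proof (cases "i < s")
      case True then show ?thesis using ui(2) by (simp add: z_def)
    next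
      case False
      then have "i - s \<in> S" using that by (auto simp: J_def)
      then show ?thesis using False S in_span[OF q1, of "{..<n}" "i - s" \<alpha>] by (auto simp: z_def)
    qed
    have "card J \<le> card {..<n}"
      by (rule dim_bound[OF A q cq finJ zind zs _ ai]) auto
    moreover have "card J = s + card S"
      unfolding J_def using finS disj injS by (simp add: card_Un_disjoint card_image)
    ultimately show ?thesis by simp
  qed
  define SS where "SS = {card S | S. S \<subseteq> {..<n} \<and> lin_indep_Fq q S w}"
  have "SS \<subseteq> card ` Pow {..<n}" by (auto simp: SS_def)
  then have "finite SS" by (rule finite_subset) simp
  moreover have "0 \<in> SS" unfolding SS_def by (intro CollectI exI[of _ "{}"]) (simp add: lin_indep_Fq_def)
  ultimately have "Max SS \<le> n - s" using bound by (subst Max_le_iff) (auto simp: SS_def)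
  then show ?thesis by (simp add: rank_q_def SS_def)
qed


lemma good_count:
  fixes \<alpha> :: "nat \<Rightarrow> 'a::{finite,field}"
  assumes A: "\<And>x y::'a. (x+y)^q = x^q + y^q" and q: "q \<ge> 2"
    and cq: "card (Fq q :: 'a set) = q"
    and ai: "lin_indep_Fq q {..<n} \<alpha>" and sn: "s \<le> n"
  shows "gauss_binom q n s \<le> real (card {p \<in> words s. \<exists>u\<in>tup q s (spanq q \<alpha> {..<n}). \<forall>j<s. mon q p s (u j) = 0})"
proof -
  have q1: "q \<ge> 1" using q by simp
  define V where "V = spanq q \<alpha> {..<n}"
  define Good where "Good = {p \<in> words s. \<exists>u\<in>tup q s V. \<forall>j<s. mon q p s (u j) = 0}"
  define F where "F = (\<lambda>p. {u \<in> tup q s V. \<forall>j<s. mon q p s (u j) = 0})"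
  define B where "B = (\<Prod>i<s. q^s - q^i)"
  have cV: "card V = q^n" using card_span[OF A q1 _ ai] cq by (simp add: V_def)
  have cT: "card (tup q s V) = (\<Prod>i<s. q^n - q^i)"
    using card_tup[OF A q1 closed_span[OF A q1], of s \<alpha> "{..<n}"] cV cq by (simp add: V_def)
  have finG: "finite Good" by (rule finite_subset[OF _ finite_words[of s]]) (auto simp: Good_def)
  have cF: "card (F p) \<le> B" for p
  proof -
    define R where "R = {x::'a. lp q (p(s:=1)) (Suc s) x = 0}"
    have "F p \<subseteq> tup q s R"
      by (auto simp: F_def tup_def R_def mon_def)
    then have "card (F p) \<le> card (tup q s R)"
      by (intro card_mono) (auto intro: finite_subset[OF _ finite_words[of s]] simp: tup_def)
    also have "\<dots> = (\<Prod>i<s. card R - q^i)"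
      using card_tup[OF A q1 closed_roots[OF A q1], of s "p(s:=1)" "Suc s"] cq by (simp add: R_def)
    also have "\<dots> \<le> B" unfolding B_def
    proof (rule prod_mono)
      fix i assume "i \<in> {..<s}"
      have "card R \<le> q^s" using card_roots_mon[OF q, of p s] by (simp add: R_def mon_def)
      then show "0 \<le> card R - q^i \<and> card R - q^i \<le> q^s - q^i" by simp
    qed
    finally show ?thesis .
  qed
  have "tup q s V \<subseteq> (\<Union>p\<in>Good. F p)"
  proof
    fix u assume u: "u \<in> tup q s V"
    then obtain p where p: "p \<in> words s" "\<forall>j<s. mon q p s (u j) = 0"
      using exists_mon[OF A q cq, of s u] by (auto simp: tup_def)
    then have "p \<in> Good" using u by (auto simp: Good_def)
    then show "u \<in> (\<Union>p\<in>Good. F p)" using u p by (auto simp: F_def)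
  qed
  then have "card (tup q s V) \<le> card (\<Union>p\<in>Good. F p)"
    by (intro card_mono) (auto intro: finite_subset[OF _ finite_words[of s]] simp: F_def tup_def)
  also have "\<dots> \<le> (\<Sum>p\<in>Good. card (F p))" by (rule card_UN_le[OF finG])
  also have "\<dots> \<le> (\<Sum>p\<in>Good. B)" by (rule sum_mono) (rule cF)
  finally have le: "(\<Prod>i<s. q^n - q^i) \<le> card Good * B" using cT by simp
  have numr: "real (\<Prod>i<s. q^n - q^i) = (\<Prod>i<s. real q ^ n - real q ^ i)"
  proof -
    have "\<And>i. i \<in> {..<s} \<Longrightarrow> q^i \<le> q^n" using sn q by (intro power_increasing) auto
    then show ?thesis by (simp add: of_nat_diff)
  qed
  have denr: "real B = (\<Prod>i<s. real q ^ s - real q ^ i)"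
  proof -
    have "\<And>i. i \<in> {..<s} \<Longrightarrow> q^i \<le> q^s" using q by (intro power_increasing) auto
    then show ?thesis unfolding B_def by (simp add: of_nat_diff)
  qed
  have Bpos: "(\<Prod>i<s. real q ^ s - real q ^ i) > 0"
  proof (rule prod_pos)
    fix i assume "i \<in> {..<s}"
    then have "real q ^ i < real q ^ s" using q by (intro power_strict_increasing) auto
    then show "real q ^ s - real q ^ i > 0" by simp
  qed
  have "gauss_binom q n s = (\<Prod>i<s. real q ^ n - real q ^ i) / (\<Prod>i<s. real q ^ s - real q ^ i)"
    unfolding gauss_binom_def by (rule prod_dividef)
  also have "\<dots> \<le> real (card Good)"
  proof -
    have "real (\<Prod>i<s. q^n - q^i) \<le> real (card Good) * real B" using le
      by (metis of_nat_le_iff of_nat_mult)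
    then show ?thesis using numr denr Bpos by (simp add: divide_le_eq)
  qed
  finally show ?thesis by (simp add: Good_def V_def)
qed


lemma lpe_lp: "lin_poly_eval q k p x = lp q p k x"
  by (simp add: lin_poly_eval_def lp_def frob_def)

lemma split_lp:
  assumes "k \<le> s"
  shows "lp q p k x + lp q (\<lambda>i. if k \<le> i then p i else 0) s x = lp q p s x"
proof -
  have "lp q p s x = (\<Sum>i<s. (if i \<in> {i. i < k} then p i * x^(q^i) else 0) + (if k \<le> i then p i else 0) * x^(q^i))"
    unfolding lp_def by (intro sum.cong) auto
  also have "\<dots> = (\<Sum>i\<in>{..<s} \<inter> {i. i < k}. p i * x^(q^i)) + lp q (\<lambda>i. if k \<le> i then p i else 0) s x"
    by (simp add: sum.distrib sum.inter_restrict lp_def)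
  also have "{..<s} \<inter> {i. i < k} = {..<k}" using assms by auto
  finally show ?thesis by (simp add: lp_def)
qed

lemma main_exists:
  fixes \<alpha> :: "nat \<Rightarrow> 'a::{finite,field}"
  assumes A: "\<And>x y::'a. (x+y)^q = x^q + y^q" and q: "q \<ge> 2"
    and cq: "card (Fq q :: 'a set) = q" and cU: "card (UNIV :: 'a set) = q ^ m"
    and ai: "lin_indep_Fq q {..<n} \<alpha>" and ks: "k \<le> s" and sn: "s \<le> n"
  shows "\<exists>r\<in>words n. gauss_binom q n s / (real q ^ m) ^ (s - k)
           \<le> real (card (rank_ball q n (n - s) r \<inter> gabidulin q n k \<alpha>))"
proof -
  define V where "V = spanq q \<alpha> {..<n}"
  define Good where "Good = {p \<in> words s. \<exists>u\<in>tup q s V. \<forall>j<s. mon q p s (u j) = 0}"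
  have gG: "gauss_binom q n s \<le> real (card Good)"
    using good_count[OF A q cq ai sn] by (simp add: Good_def V_def)
  have qm: "(real q ^ m) ^ (s - k) > 0" using q by simp
  have finG: "finite Good" by (rule finite_subset[OF _ finite_words[of s]]) (auto simp: Good_def)
  show ?thesis
  proof (cases "Good = {}")
    case True
    have "gauss_binom q n s / (real q ^ m) ^ (s - k) \<le> 0" using gG True qm
      by (simp add: divide_le_0_iff)
    moreover have "(\<lambda>_::nat. 0::'a) \<in> words n" by (simp add: words_def)
    ultimately show ?thesis by (intro bexI[of _ "\<lambda>_::nat. 0::'a"]) (auto intro: order_trans)
  next
    case False
    define hi where "hi = (\<lambda>p::nat \<Rightarrow> 'a. \<lambda>i. if k \<le> i then p i else 0)"
    define H where "H = hi ` Good"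
    define Fib where "Fib = (\<lambda>h. {p \<in> Good. hi p = h})"
    have finH: "finite H" using finG by (simp add: H_def)
    have HnE: "H \<noteq> {}" using False by (simp add: H_def)
    define sh where "sh = (\<lambda>h::nat \<Rightarrow> 'a. \<lambda>i. h (i + k))"
    have "sh ` H \<subseteq> words (s - k)"
    proof
      fix y assume "y \<in> sh ` H"
      then obtain p where p: "p \<in> Good" "y = sh (hi p)" by (auto simp: H_def)
      then have "p \<in> words s" by (simp add: Good_def)
      then show "y \<in> words (s - k)" using p(2) by (auto simp: words_def sh_def hi_def)
    qed
    moreover have "inj_on sh H"
    proof (rule inj_onI)
      fix h h' assume h: "h \<in> H" and h': "h' \<in> H" and e: "sh h = sh h'"
      show "h = h'"
      proof
        fix i show "h i = h' i"
        proof (cases "k \<le> i")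
          case True
          then have "sh h (i - k) = sh h' (i - k)" using e by simp
          then show ?thesis using True by (simp add: sh_def)
        next
          case False then show ?thesis using h h' by (auto simp: H_def hi_def)
        qed
      qed
    qed
    ultimately have cH: "card H \<le> (q ^ m) ^ (s - k)"
      using card_mono[OF finite_words, of "sh ` H" "s - k"] card_words[where 'a='a, of "s - k"] cU
      by (simp add: card_image)
    define M where "M = Max ((\<lambda>h. card (Fib h)) ` H)"
    have "M \<in> (\<lambda>h. card (Fib h)) ` H" unfolding M_def using finH HnE by (intro Max_in) auto
    then obtain h0 where h0: "h0 \<in> H" "card (Fib h0) = M" by auto
    have Mge: "card (Fib h) \<le> M" if "h \<in> H" for h
      unfolding M_def using finH that by (intro Max_ge) auto
    have "Good = (\<Union>h\<in>H. Fib h)" by (auto simp: H_def Fib_def)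
    then have "card Good \<le> (\<Sum>h\<in>H. card (Fib h))" using card_UN_le[OF finH, of Fib] by simp
    also have "\<dots> \<le> (\<Sum>h\<in>H. M)" by (rule sum_mono) (rule Mge)
    also have "\<dots> = card H * M" by simp
    also have "\<dots> \<le> (q ^ m) ^ (s - k) * M" using cH by simp
    finally have cGM: "real (card Good) \<le> (real q ^ m) ^ (s - k) * real (card (Fib h0))"
      using h0 by (metis of_nat_le_iff of_nat_mult of_nat_power)
    have bound: "gauss_binom q n s / (real q ^ m) ^ (s - k) \<le> real (card (Fib h0))"
      using gG cGM qm by (simp add: divide_le_eq mult.commute)
    define r where "r = (\<lambda>j. if j < n then - (lp q h0 s (\<alpha> j) + \<alpha> j ^ (q^s)) else 0)"
    define cw where "cw = (\<lambda>p j. if j < n then lin_poly_eval q k p (\<alpha> j) else 0)"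
    have rW: "r \<in> words n" by (simp add: r_def words_def)
    have sub: "cw ` Fib h0 \<subseteq> rank_ball q n (n - s) r \<inter> gabidulin q n k \<alpha>"
    proof
      fix c assume "c \<in> cw ` Fib h0"
      then obtain p where p: "p \<in> Fib h0" "c = cw p" by auto
      then have pG: "p \<in> Good" and hp: "hi p = h0" by (auto simp: Fib_def)
      then obtain u where u: "u \<in> tup q s V" "\<forall>j<s. mon q p s (u j) = 0" by (auto simp: Good_def)
      have diff: "(cw p - r) j = mon q p s (\<alpha> j)" if "j < n" for j
      proof -
        have "lp q p k (\<alpha> j) + lp q h0 s (\<alpha> j) = lp q p s (\<alpha> j)"
          using split_lp[OF ks, of q p "\<alpha> j"] hp by (simp add: hi_def)
        then show ?thesis using that by (simp add: cw_def r_def lpe_lp mon_eq)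
      qed
      have "rank_q q n (cw p - r) \<le> n - s"
        by (rule rank_le[OF A q cq ai u(1)[unfolded V_def]]) (use u(2) diff in auto)
      moreover have "cw p \<in> words n" by (simp add: cw_def words_def)
      moreover have "cw p \<in> gabidulin q n k \<alpha>" by (auto simp: gabidulin_def cw_def)
      ultimately show "c \<in> rank_ball q n (n - s) r \<inter> gabidulin q n k \<alpha>"
        using p(2) by (simp add: rank_ball_def)
    qed
    have inj: "inj_on cw (Fib h0)"
    proof (rule inj_onI)
      fix p p' assume p: "p \<in> Fib h0" and p': "p' \<in> Fib h0" and e: "cw p = cw p'"
      have z: "lp q (\<lambda>i. p i - p' i) k (\<alpha> j) = 0" if "j < n" for j
      proof -
        have "cw p j = cw p' j" using e by simp
        then show ?thesis using that by (simp add: cw_def lpe_lp lp_coeff_diff)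
      qed
      have lowk: "\<forall>i<k. p i - p' i = 0"
        by (rule vanish_zero[OF A q cq ai z]) (use ks sn in auto)
      have "hi p = hi p'" using p p' by (simp add: Fib_def)
      show "p = p'"
      proof
        fix i show "p i = p' i"
        proof (cases "k \<le> i")
          case True
          then show ?thesis using fun_cong[OF \<open>hi p = hi p'\<close>, of i] by (simp add: hi_def)
        next
          case False then show ?thesis using lowk by simp
        qed
      qed
    qed
    have fin: "finite (rank_ball q n (n - s) r \<inter> gabidulin q n k \<alpha>)"
      by (rule finite_subset[OF _ finite_words[of n]]) (auto simp: rank_ball_def)
    have "card (Fib h0) \<le> card (rank_ball q n (n - s) r \<inter> gabidulin q n k \<alpha>)"
      using card_mono[OF fin sub] card_image[OF inj] by simp
    then show ?thesis using bound rW by (intro bexI[of _ r]) (auto intro: order_trans)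
  qed
qed


lemma gauss_lower:
  assumes q: "q \<ge> 2" and sn: "s \<le> n"
  shows "real q ^ (s * (n - s)) \<le> gauss_binom q n s"
proof -
  define x where "x = real q"
  have x1: "x \<ge> 1" using q by (simp add: x_def)
  have "real q ^ (s * (n - s)) = (\<Prod>i<s. x ^ (n - s))"
    by (simp add: x_def power_mult[symmetric] mult.commute)
  also have "\<dots> \<le> (\<Prod>i<s. (x ^ n - x ^ i) / (x ^ s - x ^ i))"
  proof (rule prod_mono)
    fix i assume i: "i \<in> {..<s}"
    have pos: "x ^ s - x ^ i > 0" using i q by (simp add: x_def power_strict_increasing)
    have "x ^ i \<le> x ^ (n - s) * x ^ i" using x1 by (simp add: one_le_power)
    then have "x ^ (n - s) * (x ^ s - x ^ i) \<le> x ^ n - x ^ i"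
      using sn by (simp add: right_diff_distrib power_add[symmetric])
    then show "0 \<le> x ^ (n - s) \<and> x ^ (n - s) \<le> (x ^ n - x ^ i) / (x ^ s - x ^ i)"
      using pos x1 by (simp add: le_divide_eq mult.commute)
  qed
  finally show ?thesis by (simp add: gauss_binom_def x_def)
qed

lemma powi_nat_diff: "(x::real) \<noteq> 0 \<Longrightarrow> x powi (int a - int b) = x ^ a / x ^ b"
  by (simp add: power_int_diff)

theorem theorem1:
  fixes q m n k \<tau> :: nat and \<alpha> :: "nat \<Rightarrow> 'a::{finite,field}"
  assumes "\<exists>p e. prime p \<and> e \<ge> 1 \<and> q = p ^ e"
    and "card (UNIV :: 'a set) = q ^ m"
    and "n \<le> m" and "1 \<le> k" and "k \<le> n"
    and "lin_indep_Fq q {..<n} \<alpha>"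
    and "\<tau> < n - k + 1"
  shows "let d = n - k + 1;
             L = Max ((\<lambda>r'. card (rank_ball q n \<tau> r' \<inter> gabidulin q n k \<alpha>)) ` words n)
         in (\<exists>r \<in> words n.
               real L \<ge> real (card (rank_ball q n \<tau> r \<inter> gabidulin q n k \<alpha>))
             \<and> real (card (rank_ball q n \<tau> r \<inter> gabidulin q n k \<alpha>))
                 \<ge> gauss_binom q n (n - \<tau>) / (real q ^ m) ^ (n - \<tau> - k)
             \<and> gauss_binom q n (n - \<tau>) / (real q ^ m) ^ (n - \<tau> - k)
                 \<ge> real q ^ m * real q powi (int \<tau> * (int m + int n) - int \<tau> ^ 2 - int m * int d))
            \<and> (n = m \<longrightarrow> real L \<ge> real q ^ n * real q powi (2 * int n * int \<tau> - int \<tau> ^ 2 - int n * int d))"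
proof -
  obtain p e where pe: "prime p" "e \<ge> 1" "q = p ^ e" using assms(1) by blast
  have q: "q \<ge> 2"
  proof -
    have "p \<ge> 2" using pe(1) by (simp add: prime_ge_2_nat)
    then have "p ^ 1 \<le> p ^ e" using pe(2) by (intro power_increasing) auto
    then show ?thesis using \<open>p \<ge> 2\<close> pe(3) by simp
  qed
  have cU: "card (UNIV :: 'a set) = q ^ m" by (rule assms(2))
  have cpos: "CHAR('a) > 0" by (rule finite_imp_CHAR_pos) simp
  have cprime: "prime CHAR('a)" by (rule prime_CHAR_semidom[OF cpos])
  have "CHAR('a) dvd p ^ (e * m)" using CHAR_dvd_CARD[where 'a='a] cU pe(3) by (simp add: power_mult)
  then have "CHAR('a) dvd p" using cprime prime_dvd_power by blast
  then have cp: "CHAR('a) = p" using cprime pe(1) primes_dvd_imp_eq by blast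
  have A: "\<And>x y::'a. (x+y)^q = x^q + y^q"
    using freshmans_dream'[OF cprime, of q e] cp pe(3) by simp
  have cq: "card (Fq q :: 'a set) = q"
    using card_Fq_le[OF q, where 'a='a] card_Fq_ge[OF A q cU] by (rule antisym)
  define s where "s = n - \<tau>"
  have ks: "k \<le> s" and sn: "s \<le> n" and ns: "n - s = \<tau>" using assms(5,7) by (auto simp: s_def)
  define d where "d = n - k + 1"
  define L where "L = Max ((\<lambda>r'. card (rank_ball q n \<tau> r' \<inter> gabidulin q n k \<alpha>)) ` words n)"
  obtain r where r: "r \<in> words n"
    and rb: "gauss_binom q n s / (real q ^ m) ^ (s - k) \<le> real (card (rank_ball q n \<tau> r \<inter> gabidulin q n k \<alpha>))"
    using main_exists[OF A q cq cU assms(6) ks sn] ns by auto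
  have Lr: "card (rank_ball q n \<tau> r \<inter> gabidulin q n k \<alpha>) \<le> L"
    unfolding L_def using r finite_words[of n] by (intro Max_ge) auto
  have qpos: "real q > 0" using q by simp
  have expo: "int \<tau> * (int m + int n) - int \<tau> ^ 2 - int m * int d + int m
              = int (s * (n - s)) - int (m * (s - k))"
  proof -
    have i1: "int (s * (n - s)) = int s * int \<tau>" using ns by simp
    have i2: "int (m * (s - k)) = int m * (int s - int k)" using ks by (simp add: of_nat_diff)
    have i3: "int s = int n - int \<tau>" using sn ns by (simp add: s_def of_nat_diff)
    have i4: "int d = int n - int k + 1" using assms(5) by (simp add: d_def of_nat_diff)
    show ?thesis unfolding i1 i2 i3 i4 by (simp add: algebra_simps power2_eq_square)
  qed
  have "real q ^ m * real q powi (int \<tau> * (int m + int n) - int \<tau> ^ 2 - int m * int d)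
        = real q powi (int (s * (n - s)) - int (m * (s - k)))"
  proof -
    have "real q powi (int \<tau> * (int m + int n) - int \<tau> ^ 2 - int m * int d + int m)
      = real q powi (int \<tau> * (int m + int n) - int \<tau> ^ 2 - int m * int d) * real q powi (int m)"
      by (rule power_int_add) (use qpos in simp)
    then show ?thesis unfolding expo by (simp add: mult.commute)
  qed
  also have "\<dots> = real q ^ (s * (n - s)) / (real q ^ m) ^ (s - k)"
    using qpos powi_nat_diff[of "real q" "s * (n - s)" "m * (s - k)"] by (simp add: power_mult)
  also have "\<dots> \<le> gauss_binom q n s / (real q ^ m) ^ (s - k)"
    using gauss_lower[OF q sn] qpos by (simp add: divide_right_mono)
  finally have gb: "real q ^ m * real q powi (int \<tau> * (int m + int n) - int \<tau> ^ 2 - int m * int d)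
        \<le> gauss_binom q n s / (real q ^ m) ^ (s - k)" .
  have part1: "real L \<ge> real (card (rank_ball q n \<tau> r \<inter> gabidulin q n k \<alpha>))
             \<and> real (card (rank_ball q n \<tau> r \<inter> gabidulin q n k \<alpha>))
                 \<ge> gauss_binom q n (n - \<tau>) / (real q ^ m) ^ (n - \<tau> - k)
             \<and> gauss_binom q n (n - \<tau>) / (real q ^ m) ^ (n - \<tau> - k)
                 \<ge> real q ^ m * real q powi (int \<tau> * (int m + int n) - int \<tau> ^ 2 - int m * int d)"
    using Lr rb gb by (simp add: s_def)
  have part2: "n = m \<longrightarrow> real L \<ge> real q ^ n * real q powi (2 * int n * int \<tau> - int \<tau> ^ 2 - int n * int d)"
  proof
    assume nm: "n = m"
    have "real q ^ n * real q powi (2 * int n * int \<tau> - int \<tau> ^ 2 - int n * int d)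
        = real q ^ m * real q powi (int \<tau> * (int m + int n) - int \<tau> ^ 2 - int m * int d)"
      using nm by (simp add: algebra_simps)
    also have "\<dots> \<le> real L" using part1 by linarith
    finally show "real L \<ge> real q ^ n * real q powi (2 * int n * int \<tau> - int \<tau> ^ 2 - int n * int d)" .
  qed
  show ?thesis unfolding Let_def using part1 part2 r by (auto simp: d_def L_def)
qed

end
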